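(* Let $S \geq 1$ and, for $i = 1,\dots,S$, let $\boldsymbol{M}_i \in \mathbb{R}^{m_i \times m_i}$ be symmetric positive definite, let $\boldsymbol{K}_i \in \mathbb{R}^{m_i \times m_i}$ be symmetric positive semidefinite, and let $\boldsymbol{C}_i \in \mathbb{R}^{p \times m_i}$ be signed Boolean matrices such that the block matrix $[\boldsymbol{C}_1 \ \cdots \ \boldsymbol{C}_S]$ has full row rank $p$. Let $\Delta t > 0$ and $1/2 < \gamma \leq 1$. Suppose that sequences $\boldsymbol{d}_i^{(n)}, \boldsymbol{v}_i^{(n)} \in \mathbb{R}^{m_i}$ ($i=1,\dots,S$) and $\boldsymbol{\lambda}^{(n)} \in \mathbb{R}^p$, $n = 0,1,2,\dots$, satisfy (the $\boldsymbol{d}$-continuity domain decomposition method with zero external forcing): for all $n \geq 0$ and all $i$: $\boldsymbol{M}_i \boldsymbol{v}_i^{(n)} + \boldsymbol{K}_i \boldsymbol{d}_i^{(n)} = \boldsymbol{C}_i^{\mathrm{T}} \boldsymbol{\lambda}^{(n)}$ and $\sum_{i=1}^S \boldsymbol{C}_i \boldsymbol{d}_i^{(n)} = \boldsymbol{0}$; for all $n \geq 1$ and all $i$: $\boldsymbol{d}_i^{(n)} = \boldsymbol{d}_i^{(n-1)} + \Delta t\left((1-\gamma)\boldsymbol{v}_i^{(n-1)} + \gamma \boldsymbol{v}_i^{(n)}\right)$. Then the sequences $(\boldsymbol{d}_i^{(n)})_{n\ge0}$, $(\boldsymbol{v}_i^{(n)})_{n\ge0}$ ($i=1,\dots,S$)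 and $(\boldsymbol{\lambda}^{(n)})_{n\ge0}$ are all bounded.
   Context: A signed Boolean matrix is a matrix whose entries are in $\{-1,0,+1\}$ and each of whose rows has at most one nonzero entry. A sequence of vectors is bounded if there is a constant $C$ independent of $n$ with $\|\boldsymbol{x}^{(n)}\| < C$ for all $n$ (any norm). The equations model a first-order transient system (e.g. semi-discrete heat conduction) decomposed into $S$ subdomains coupled by Lagrange multipliers $\boldsymbol{\lambda}$, integrated in time with the generalized trapezoidal rule with parameter $\gamma$ and time step $\Delta t$. *)

theory Defs
  imports "Jordan_Normal_Form.DL_Rank"
begin

definition sym_mat :: "real mat \<Rightarrow> bool" where
  "sym_mat A \<longleftrightarrow> A = transpose_mat A"

definition pos_def_mat :: "nat \<Rightarrow> real mat \<Rightarrow> bool" where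
  "pos_def_mat k A \<longleftrightarrow> A \<in> carrier_mat k k \<and> sym_mat A \<and>
     (\<forall>x \<in> carrier_vec k. x \<noteq> 0\<^sub>v k \<longrightarrow> x \<bullet> (A *\<^sub>v x) > 0)"

definition pos_semidef_mat :: "nat \<Rightarrow> real mat \<Rightarrow> bool" where
  "pos_semidef_mat k A \<longleftrightarrow> A \<in> carrier_mat k k \<and> sym_mat A \<and>
     (\<forall>x \<in> carrier_vec k. x \<bullet> (A *\<^sub>v x) \<ge> 0)"

definition signed_boolean_mat :: "real mat \<Rightarrow> bool" where
  "signed_boolean_mat A \<longleftrightarrow>
     (\<forall>r < dim_row A. \<forall>c < dim_col A. A $$ (r, c) \<in> {-1, 0, 1}) \<and>
     (\<forall>r < dim_row A. \<forall>c1 < dim_col A. \<forall>c2 < dim_col A.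
        A $$ (r, c1) \<noteq> 0 \<longrightarrow> A $$ (r, c2) \<noteq> 0 \<longrightarrow> c1 = c2)"

definition block_row :: "nat \<Rightarrow> nat \<Rightarrow> (nat \<Rightarrow> real mat) \<Rightarrow> real mat" where
  "block_row p S C = mat_of_cols p (concat (map (\<lambda>i. cols (C i)) [0..<S]))"

definition mat_rank :: "nat \<Rightarrow> real mat \<Rightarrow> nat" where
  "mat_rank p A = vec_space.rank p A"

definition bounded_vec_seq :: "nat \<Rightarrow> (nat \<Rightarrow> real vec) \<Rightarrow> bool" where
  "bounded_vec_seq k x \<longleftrightarrow> (\<exists>B. \<forall>n. \<forall>j < k. \<bar>x n $ j\<bar> < B)"

end

theory Submission
  imports Defs
begin


lemma sp_mv:
  assumes "A \<in> carrier_mat k k" "x \<in> carrier_vec k" "y \<in> carrier_vec k"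
  shows "x \<bullet> (A *\<^sub>v y) = (\<Sum>r<k. \<Sum>c<k. x$r * A$$(r,c) * y$c)"
  using assms by (auto simp: scalar_prod_def mult_mat_vec_def row_def sum_distrib_left atLeast0LessThan intro!: sum.cong simp: ac_simps)

lemma bil_r:
  fixes A :: "real mat"
  assumes A: "A \<in> carrier_mat k k" and x: "x \<in> carrier_vec k" and y: "y \<in> carrier_vec k" and z: "z \<in> carrier_vec k"
  shows "x \<bullet> (A *\<^sub>v (s \<cdot>\<^sub>v y + t \<cdot>\<^sub>v z)) = s * (x \<bullet> (A *\<^sub>v y)) + t * (x \<bullet> (A *\<^sub>v z))"
  using assms by (simp add: mult_add_distrib_mat_vec[OF A] mult_mat_vec[OF A] scalar_prod_add_distrib[of _ k])

lemma bil_l: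
  fixes A :: "real mat"
  assumes A: "A \<in> carrier_mat k k" and x: "x \<in> carrier_vec k" and y: "y \<in> carrier_vec k" and z: "z \<in> carrier_vec k"
  shows "(s \<cdot>\<^sub>v y + t \<cdot>\<^sub>v z) \<bullet> (A *\<^sub>v x) = s * (y \<bullet> (A *\<^sub>v x)) + t * (z \<bullet> (A *\<^sub>v x))"
  using assms by (simp add: add_scalar_prod_distrib[of _ k])

lemma sym_bil:
  fixes A :: "real mat"
  assumes A: "A \<in> carrier_mat k k" and s: "sym_mat A" and x: "x \<in> carrier_vec k" and y: "y \<in> carrier_vec k"
  shows "x \<bullet> (A *\<^sub>v y) = y \<bullet> (A *\<^sub>v x)"
proof -
  have "(transpose_mat A *\<^sub>v x) \<bullet> y = x \<bullet> (A *\<^sub>v y)" by (rule transpose_vec_mult_scalar[OF A y x])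
  then have "(A *\<^sub>v x) \<bullet> y = x \<bullet> (A *\<^sub>v y)" using s unfolding sym_mat_def by simp
  then show ?thesis using comm_scalar_prod[of "A *\<^sub>v x" k y] A x y by auto
qed

lemma step_energy:
  fixes Mm Km Cm :: "real mat" and a va vb la lb b :: "real vec"
  assumes M: "pos_def_mat k Mm" and K: "pos_semidef_mat k Km" and C: "Cm \<in> carrier_mat p k"
    and a: "a \<in> carrier_vec k" and va: "va \<in> carrier_vec k" and vb: "vb \<in> carrier_vec k"
    and la: "la \<in> carrier_vec p" and lb: "lb \<in> carrier_vec p"
    and e1: "Mm *\<^sub>v va + Km *\<^sub>v a = transpose_mat Cm *\<^sub>v la"
    and e2: "Mm *\<^sub>v vb + Km *\<^sub>v b = transpose_mat Cm *\<^sub>v lb"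
    and bdef: "b = a + dt \<cdot>\<^sub>v ((1 - g) \<cdot>\<^sub>v va + g \<cdot>\<^sub>v vb)"
    and dt: "dt > 0" and g: "1/2 < g"
  shows "b \<bullet> (Mm *\<^sub>v b) - a \<bullet> (Mm *\<^sub>v a) \<le>
     2 * dt * (((1 - g) \<cdot>\<^sub>v la + g \<cdot>\<^sub>v lb) \<bullet> ((1 - g) \<cdot>\<^sub>v (Cm *\<^sub>v a) + g \<cdot>\<^sub>v (Cm *\<^sub>v b)))"
proof -
  have Mc: "Mm \<in> carrier_mat k k" and Ms: "sym_mat Mm" and Mp: "\<And>x. x \<in> carrier_vec k \<Longrightarrow> x \<noteq> 0\<^sub>v k \<Longrightarrow> x \<bullet> (Mm *\<^sub>v x) > 0"
    using M unfolding pos_def_mat_def by auto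
  have Kc: "Km \<in> carrier_mat k k" and Kp: "\<And>x. x \<in> carrier_vec k \<Longrightarrow> x \<bullet> (Km *\<^sub>v x) \<ge> 0"
    using K unfolding pos_semidef_mat_def by auto
  define w where "w = (1 - g) \<cdot>\<^sub>v va + g \<cdot>\<^sub>v vb"
  define db where "db = a + (g * dt) \<cdot>\<^sub>v w"
  define Y where "Y = (1 - g) \<cdot>\<^sub>v (Cm *\<^sub>v a) + g \<cdot>\<^sub>v (Cm *\<^sub>v b)"
  have w: "w \<in> carrier_vec k" using va vb unfolding w_def by auto
  have b: "b \<in> carrier_vec k" using a w bdef unfolding w_def by auto
  have db: "db \<in> carrier_vec k" using a w unfolding db_def by auto
  have Y: "Y \<in> carrier_vec p" using C a b unfolding Y_def by auto
  have wMw: "w \<bullet> (Mm *\<^sub>v w) \<ge> 0"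
    using Mp[OF w] w Mc by (cases "w = 0\<^sub>v k") auto
  have dKd: "db \<bullet> (Km *\<^sub>v db) \<ge> 0" using Kp[OF db] .
  have sA: "\<And>r c. r<k \<Longrightarrow> c < k \<Longrightarrow> Mm$$(c,r) = Mm$$(r,c)"
    using Ms Mc unfolding sym_mat_def by (metis carrier_matD index_transpose_mat(1))
  have sw: "(\<Sum>r<k. \<Sum>c<k. w$r * Mm$$(r,c) * a$c) = (\<Sum>r<k. \<Sum>c<k. a$r * Mm$$(r,c) * w$c)"
    apply (subst sum.swap) using sA by (auto intro!: sum.cong simp: ac_simps)
  have "b \<bullet> (Mm *\<^sub>v b) = (\<Sum>r<k. \<Sum>c<k. (a + dt \<cdot>\<^sub>v w)$r * Mm$$(r,c) * (a + dt \<cdot>\<^sub>v w)$c)"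
    unfolding bdef w_def[symmetric] by (rule sp_mv[OF Mc]) (use a w in auto)
  also have "\<dots> = (\<Sum>r<k. \<Sum>c<k. (a$r + dt * w$r) * Mm$$(r,c) * (a$c + dt * w$c))"
    using a w by (auto intro!: sum.cong)
  also have "\<dots> = (\<Sum>r<k. \<Sum>c<k. a$r * Mm$$(r,c) * a$c) + dt * (\<Sum>r<k. \<Sum>c<k. w$r * Mm$$(r,c) * a$c)
     + dt * (\<Sum>r<k. \<Sum>c<k. a$r * Mm$$(r,c) * w$c) + dt^2 * (\<Sum>r<k. \<Sum>c<k. w$r * Mm$$(r,c) * w$c)"
    by (simp add: algebra_simps sum.distrib sum_distrib_left power2_eq_square)
  finally have X1: "b \<bullet> (Mm *\<^sub>v b) = a \<bullet> (Mm *\<^sub>v a) + 2*dt*(a \<bullet> (Mm *\<^sub>v w)) + dt^2 * (w \<bullet> (Mm *\<^sub>v w))"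
    using sw by (simp add: sp_mv[OF Mc a a] sp_mv[OF Mc a w] sp_mv[OF Mc w w])
  have X2: "db \<bullet> (Mm *\<^sub>v w) = a \<bullet> (Mm *\<^sub>v w) + g * dt * (w \<bullet> (Mm *\<^sub>v w))"
    unfolding db_def using bil_l[OF Mc w a w, of 1 "g*dt"] a w by simp
  have X3: "db \<bullet> (Mm *\<^sub>v w) = (1-g) * (db \<bullet> (Mm *\<^sub>v va)) + g * (db \<bullet> (Mm *\<^sub>v vb))"
    unfolding w_def by (rule bil_r[OF Mc db va vb])
  have dbeq: "db = (1 - g) \<cdot>\<^sub>v a + g \<cdot>\<^sub>v b"
    unfolding db_def bdef w_def by (rule eq_vecI) (use a va vb in \<open>auto simp: algebra_simps\<close>)
  have X4: "db \<bullet> (Mm *\<^sub>v va) + db \<bullet> (Km *\<^sub>v a) = db \<bullet> (transpose_mat Cm *\<^sub>v la)"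
    using arg_cong[OF e1, of "\<lambda>z. db \<bullet> z"] scalar_prod_add_distrib[of db k "Mm *\<^sub>v va" "Km *\<^sub>v a"] db va a Mc Kc by auto
  have X5: "db \<bullet> (Mm *\<^sub>v vb) + db \<bullet> (Km *\<^sub>v b) = db \<bullet> (transpose_mat Cm *\<^sub>v lb)"
    using arg_cong[OF e2, of "\<lambda>z. db \<bullet> z"] scalar_prod_add_distrib[of db k "Mm *\<^sub>v vb" "Km *\<^sub>v b"] db vb b Mc Kc by auto
  have X6: "db \<bullet> (Km *\<^sub>v db) = (1-g) * (db \<bullet> (Km *\<^sub>v a)) + g * (db \<bullet> (Km *\<^sub>v b))"
    apply (subst (2) dbeq) by (rule bil_r[OF Kc db a b])
  have CT: "\<And>l. l \<in> carrier_vec p \<Longrightarrow> db \<bullet> (transpose_mat Cm *\<^sub>v l) = l \<bullet> Y"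
  proof -
    fix l :: "real vec" assume l: "l \<in> carrier_vec p"
    have "db \<bullet> (transpose_mat Cm *\<^sub>v l) = (transpose_mat Cm *\<^sub>v l) \<bullet> db"
      by (rule comm_scalar_prod[of _ k]) (use db l C in auto)
    also have "\<dots> = l \<bullet> (Cm *\<^sub>v db)" by (rule transpose_vec_mult_scalar[OF C db l])
    also have "Cm *\<^sub>v db = Y" unfolding dbeq Y_def
      using C a b by (simp add: mult_add_distrib_mat_vec[OF C] mult_mat_vec[OF C])
    finally show "db \<bullet> (transpose_mat Cm *\<^sub>v l) = l \<bullet> Y" .
  qed
  have X7: "((1 - g) \<cdot>\<^sub>v la + g \<cdot>\<^sub>v lb) \<bullet> Y = (1-g) * (la \<bullet> Y) + g * (lb \<bullet> Y)"
    using la lb Y by (simp add: add_scalar_prod_distrib[of _ p])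
  have "b \<bullet> (Mm *\<^sub>v b) - a \<bullet> (Mm *\<^sub>v a) = 2*dt*(db \<bullet> (Mm *\<^sub>v w)) - (2*g - 1) * dt^2 * (w \<bullet> (Mm *\<^sub>v w))"
    using X1 X2 by (simp add: algebra_simps power2_eq_square)
  also have "\<dots> \<le> 2*dt*(db \<bullet> (Mm *\<^sub>v w))"
    using wMw g dt by (simp add: mult_nonneg_nonneg)
  also have "db \<bullet> (Mm *\<^sub>v w) = ((1 - g) \<cdot>\<^sub>v la + g \<cdot>\<^sub>v lb) \<bullet> Y - db \<bullet> (Km *\<^sub>v db)"
  proof -
    have X4': "db \<bullet> (Mm *\<^sub>v va) = la \<bullet> Y - db \<bullet> (Km *\<^sub>v a)" using X4 CT[OF la] by linarith
    have X5': "db \<bullet> (Mm *\<^sub>v vb) = lb \<bullet> Y - db \<bullet> (Km *\<^sub>v b)" using X5 CT[OF lb] by linarith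
    show ?thesis unfolding X3 X4' X5' X6 X7 by (simp add: algebra_simps)
  qed
  also have "2*dt*(\<dots>) \<le> 2*dt*(((1 - g) \<cdot>\<^sub>v la + g \<cdot>\<^sub>v lb) \<bullet> Y)"
    using dKd dt by simp
  finally show ?thesis unfolding Y_def .
qed


lemma (in vec_space) rank_full_span:
  assumes A: "A \<in> carrier_mat n nc" and r: "rank A = n" and x: "x \<in> carrier_vec n"
  shows "\<exists>a U. finite U \<and> U \<subseteq> set (cols A) \<and> (\<forall>i<n. x$i = (\<Sum>u\<in>U. a u * u$i))"
proof -
  have li0: "lin_indpt {}"
    by (metis (no_types) empty_subsetI fin_dim finite_basis_exists subset_li_is_li vec_vs vectorspace.basis_def)
  obtain U where U: "finite U" "maximal U (\<lambda>T. T \<subseteq> set (cols A) \<and> lin_indpt T)"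
    using maximal_exists_superset[of "set (cols A)" "(\<lambda>T. T \<subseteq> set (cols A) \<and> lin_indpt T)" "{}"] li0 by auto
  have cU: "card U = n" using rank_card_indpt[OF A U(2)] r by simp
  have Us: "U \<subseteq> set (cols A)" "lin_indpt U" using U(2) unfolding maximal_def by auto
  have Uc: "U \<subseteq> carrier V" using Us(1) cols_dim[of A] A by auto
  have "basis U" by (rule dim_li_is_basis) (use U(1) Uc Us(2) cU dim_is_n in auto)
  then have "span U = carrier V" unfolding basis_def by auto
  then have "x \<in> span U" using x by simp
  then obtain a B where B: "x = lincomb a B" "finite B" "B \<subseteq> U" unfolding span_def by auto
  have Bc: "B \<subseteq> carrier_vec n" using B(3) Uc by auto
  show ?thesis
    apply (rule exI[of _ a], rule exI[of _ B])
    using B Us(1) lincomb_index[OF _ Bc] by auto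
qed

lemma rank_full_span':
  fixes A :: "real mat"
  assumes A: "A \<in> carrier_mat p nc" and r: "vec_space.rank p A = p" and x: "x \<in> carrier_vec p"
  shows "\<exists>a U. finite U \<and> U \<subseteq> set (cols A) \<and> (\<forall>i<p. x$i = (\<Sum>u\<in>U. a u * u$i))"
  using vec_space.rank_full_span[OF A r x] .
lemma quad_expand:
  fixes A :: "real mat"
  assumes A: "A \<in> carrier_mat k k" and s: "sym_mat A" and a: "a \<in> carrier_vec k" and w: "w \<in> carrier_vec k"
  shows "(a + t \<cdot>\<^sub>v w) \<bullet> (A *\<^sub>v (a + t \<cdot>\<^sub>v w)) = a \<bullet> (A *\<^sub>v a) + 2*t*(a \<bullet> (A *\<^sub>v w)) + t^2 * (w \<bullet> (A *\<^sub>v w))"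
proof -
  have sA: "\<And>r c. r<k \<Longrightarrow> c < k \<Longrightarrow> A$$(c,r) = A$$(r,c)"
    using s A unfolding sym_mat_def by (metis carrier_matD index_transpose_mat(1))
  have sw: "(\<Sum>r<k. \<Sum>c<k. w$r * A$$(r,c) * a$c) = (\<Sum>r<k. \<Sum>c<k. a$r * A$$(r,c) * w$c)"
    apply (subst sum.swap) using sA by (auto intro!: sum.cong simp: ac_simps)
  have "(a + t \<cdot>\<^sub>v w) \<bullet> (A *\<^sub>v (a + t \<cdot>\<^sub>v w)) = (\<Sum>r<k. \<Sum>c<k. (a + t \<cdot>\<^sub>v w)$r * A$$(r,c) * (a + t \<cdot>\<^sub>v w)$c)"
    by (rule sp_mv[OF A]) (use a w in auto)
  also have "\<dots> = (\<Sum>r<k. \<Sum>c<k. (a$r + t * w$r) * A$$(r,c) * (a$c + t * w$c))"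
    using a w by (auto intro!: sum.cong)
  also have "\<dots> = (\<Sum>r<k. \<Sum>c<k. a$r * A$$(r,c) * a$c) + t * (\<Sum>r<k. \<Sum>c<k. w$r * A$$(r,c) * a$c)
     + t * (\<Sum>r<k. \<Sum>c<k. a$r * A$$(r,c) * w$c) + t^2 * (\<Sum>r<k. \<Sum>c<k. w$r * A$$(r,c) * w$c)"
    by (simp add: algebra_simps sum.distrib sum_distrib_left power2_eq_square)
  finally show ?thesis using sw by (simp add: sp_mv[OF A a a] sp_mv[OF A a w] sp_mv[OF A w w])
qed

lemma pd_nonneg:
  assumes "pos_def_mat k A" "x \<in> carrier_vec k"
  shows "x \<bullet> (A *\<^sub>v x) \<ge> 0"
  using assms unfolding pos_def_mat_def by (cases "x = 0\<^sub>v k") (auto)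

lemma pd_coord:
  fixes A :: "real mat"
  assumes P: "pos_def_mat k A" and j: "j < k"
  shows "\<exists>c. \<forall>x\<in>carrier_vec k. \<bar>x$j\<bar> \<le> c + x \<bullet> (A *\<^sub>v x)"
proof -
  have Ac: "A \<in> carrier_mat k k" and As: "sym_mat A" and Ap: "\<And>x. x \<in> carrier_vec k \<Longrightarrow> x \<noteq> 0\<^sub>v k \<Longrightarrow> x \<bullet> (A *\<^sub>v x) > 0"
    using P unfolding pos_def_mat_def by auto
  have dA: "det A \<noteq> 0"
  proof
    assume "det A = 0"
    then obtain y where y: "y \<in> carrier_vec k" "y \<noteq> 0\<^sub>v k" "A *\<^sub>v y = 0\<^sub>v k"
      using det_0_iff_vec_prod_zero_field[OF Ac] by auto
    have "y \<bullet> (A *\<^sub>v y) > 0" by (rule Ap[OF y(1) y(2)])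
    then show False using y by simp
  qed
  have "A \<in> Units (ring_mat TYPE(real) k ())" by (rule det_non_zero_imp_unit[OF Ac dA])
  then obtain B where B: "B \<in> carrier_mat k k" "A * B = 1\<^sub>m k"
    unfolding Units_def ring_mat_def by auto
  define e where "e = (unit_vec k j :: real vec)"
  define u where "u = B *\<^sub>v e"
  have e: "e \<in> carrier_vec k" unfolding e_def by simp
  have u: "u \<in> carrier_vec k" unfolding u_def using B e by simp
  have Au: "A *\<^sub>v u = e" unfolding u_def using assoc_mult_mat_vec[OF Ac B(1) e] B e by simp
  show ?thesis
  proof (rule exI[of _ "u \<bullet> (A *\<^sub>v u)"], intro ballI)
    fix x :: "real vec" assume x: "x \<in> carrier_vec k"
    have xj: "x $ j = x \<bullet> (A *\<^sub>v u)" unfolding Au e_def using j by simp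
    have p1: "(x + 1 \<cdot>\<^sub>v u) \<bullet> (A *\<^sub>v (x + 1 \<cdot>\<^sub>v u)) \<ge> 0" by (rule pd_nonneg[OF P]) (use x u in auto)
    have p2: "(x + (-1) \<cdot>\<^sub>v u) \<bullet> (A *\<^sub>v (x + (-1) \<cdot>\<^sub>v u)) \<ge> 0" by (rule pd_nonneg[OF P]) (use x u in auto)
    note q1 = quad_expand[OF Ac As x u, of 1]
    note q2 = quad_expand[OF Ac As x u, of "-1"]
    have n1: "x \<bullet> (A *\<^sub>v x) \<ge> 0" by (rule pd_nonneg[OF P x])
    have n2: "u \<bullet> (A *\<^sub>v u) \<ge> 0" by (rule pd_nonneg[OF P u])
    show "\<bar>x$j\<bar> \<le> u \<bullet> (A *\<^sub>v u) + x \<bullet> (A *\<^sub>v x)"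
      using p1 p2 q1 q2 n1 n2 unfolding xj by (simp add: abs_le_iff)
  qed
qed

lemma bvs_intro:
  assumes "\<And>j. j < k \<Longrightarrow> \<exists>B. \<forall>n. \<bar>x n $ j\<bar> \<le> B"
  shows "bounded_vec_seq k x"
proof -
  obtain f where f: "\<And>j n. j < k \<Longrightarrow> \<bar>x n $ j\<bar> \<le> f j" using assms by metis
  show ?thesis unfolding bounded_vec_seq_def
  proof (rule exI[of _ "(\<Sum>j<k. \<bar>f j\<bar>) + 1"], intro allI impI)
    fix n j assume j: "j < k"
    have "\<bar>f j\<bar> \<le> (\<Sum>j<k. \<bar>f j\<bar>)" by (rule member_le_sum) (use j in auto)
    then show "\<bar>x n $ j\<bar> < (\<Sum>j<k. \<bar>f j\<bar>) + 1" using f[OF j, of n] by linarith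
  qed
qed

lemma bvs_elim:
  assumes "bounded_vec_seq k x" obtains B where "\<And>n j. j < k \<Longrightarrow> \<bar>x n $ j\<bar> \<le> B"
  using assms unfolding bounded_vec_seq_def by (meson less_imp_le)

lemma matvec_bounded:
  fixes A :: "real mat"
  assumes A: "A \<in> carrier_mat k' k" and x: "\<And>n. x n \<in> carrier_vec k" and b: "bounded_vec_seq k x" and c: "c < k'"
  shows "\<exists>B. \<forall>n. \<bar>(A *\<^sub>v x n)$c\<bar> \<le> B"
proof -
  obtain B0 where B0: "\<And>n j. j < k \<Longrightarrow> \<bar>x n $ j\<bar> \<le> B0" using bvs_elim[OF b] by blast
  show ?thesis
  proof (rule exI[of _ "\<Sum>q<k. \<bar>A$$(c,q)\<bar> * B0"], intro allI)
    fix n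
    have "(A *\<^sub>v x n)$c = (\<Sum>q<k. A$$(c,q) * x n $ q)"
      using A x[of n] c by (auto simp: scalar_prod_def row_def atLeast0LessThan intro!: sum.cong)
    also have "\<bar>\<dots>\<bar> \<le> (\<Sum>q<k. \<bar>A$$(c,q) * x n $ q\<bar>)" by (rule sum_abs)
    also have "\<dots> \<le> (\<Sum>q<k. \<bar>A$$(c,q)\<bar> * B0)"
      by (rule sum_mono) (auto simp: abs_mult intro: mult_left_mono B0)
    finally show "\<bar>(A *\<^sub>v x n)$c\<bar> \<le> (\<Sum>q<k. \<bar>A$$(c,q)\<bar> * B0)" .
  qed
qed

lemma geo_bound:
  fixes x w :: "nat \<Rightarrow> real"
  assumes g: "1/2 < g" "g \<le> 1" and rec: "\<And>n. n \<ge> 1 \<Longrightarrow> g * x n + (1 - g) * x (n - 1) = w n"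
    and W: "\<And>n. \<bar>w n\<bar> \<le> W"
  shows "\<bar>x n\<bar> \<le> \<bar>x 0\<bar> + W / (2*g - 1)"
proof (induction n)
  case 0
  have "W \<ge> 0" using W[of 0] by linarith
  moreover have "2*g - 1 > 0" using g by simp
  ultimately show ?case by simp
next
  case (Suc n)
  let ?R = "\<bar>x 0\<bar> + W / (2*g - 1)"
  have e: "g * x (Suc n) = w (Suc n) - (1 - g) * x n" using rec[of "Suc n"] by simp
  have "\<bar>(1 - g) * x n\<bar> \<le> (1 - g) * ?R" using Suc g by (simp add: abs_mult mult_left_mono)
  then have "\<bar>g * x (Suc n)\<bar> \<le> W + (1 - g) * ?R" using e W[of "Suc n"] by (simp add: abs_le_iff)
  moreover have "W + (1 - g) * ?R \<le> g * ?R"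
  proof -
    have pos: "2*g - 1 > 0" using g by simp
    define Z where "Z = W / (2*g - 1)"
    have WZ: "W = (2*g - 1) * Z" using pos unfolding Z_def by simp
    have "(1 - 2*g) * \<bar>x 0\<bar> \<le> 0" using pos by (simp add: mult_nonpos_nonneg)
    moreover have "W + (1 - g) * (\<bar>x 0\<bar> + Z) - g * (\<bar>x 0\<bar> + Z) = (1 - 2*g) * \<bar>x 0\<bar>"
      unfolding WZ by (simp add: algebra_simps)
    ultimately have "W + (1 - g) * (\<bar>x 0\<bar> + Z) \<le> g * (\<bar>x 0\<bar> + Z)" by linarith
    then show ?thesis unfolding Z_def .
  qed
  moreover have gpos: "g > 0" using g by simp
  ultimately have "g * \<bar>x (Suc n)\<bar> \<le> g * ?R" by linarith
  then show ?case using gpos by (simp only: mult_le_cancel_left_pos)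
qed


theorem mainTheorem2:
  fixes S p :: nat and m :: "nat \<Rightarrow> nat"
    and M K C :: "nat \<Rightarrow> real mat"
    and dt \<gamma> :: real
    and d v :: "nat \<Rightarrow> nat \<Rightarrow> real vec"
    and lam :: "nat \<Rightarrow> real vec"
  assumes S_pos: "S \<ge> 1"
    and M_pd: "\<And>i. i < S \<Longrightarrow> pos_def_mat (m i) (M i)"
    and K_psd: "\<And>i. i < S \<Longrightarrow> pos_semidef_mat (m i) (K i)"
    and C_dim: "\<And>i. i < S \<Longrightarrow> C i \<in> carrier_mat p (m i)"
    and C_sb: "\<And>i. i < S \<Longrightarrow> signed_boolean_mat (C i)"
    and C_rank: "mat_rank p (block_row p S C) = p"
    and dt_pos: "dt > 0"
    and gamma: "1/2 < \<gamma>" "\<gamma> \<le> 1"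
    and d_dim: "\<And>i n. i < S \<Longrightarrow> d i n \<in> carrier_vec (m i)"
    and v_dim: "\<And>i n. i < S \<Longrightarrow> v i n \<in> carrier_vec (m i)"
    and lam_dim: "\<And>n. lam n \<in> carrier_vec p"
    and eq_motion: "\<And>i n. i < S \<Longrightarrow>
        M i *\<^sub>v v i n + K i *\<^sub>v d i n = transpose_mat (C i) *\<^sub>v lam n"
    and eq_constraint: "\<And>n r. r < p \<Longrightarrow> (\<Sum>i<S. (C i *\<^sub>v d i n) $ r) = 0"
    and eq_trap: "\<And>i n. i < S \<Longrightarrow> n \<ge> 1 \<Longrightarrow>
        d i n = d i (n - 1) + dt \<cdot>\<^sub>v ((1 - \<gamma>) \<cdot>\<^sub>v v i (n - 1) + \<gamma> \<cdot>\<^sub>v v i n)"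
  shows "(\<forall>i < S. bounded_vec_seq (m i) (d i) \<and> bounded_vec_seq (m i) (v i))
         \<and> bounded_vec_seq p lam"
proof -
  have Mc: "\<And>i. i < S \<Longrightarrow> M i \<in> carrier_mat (m i) (m i)" using M_pd unfolding pos_def_mat_def by auto
  have Kc: "\<And>i. i < S \<Longrightarrow> K i \<in> carrier_mat (m i) (m i)" using K_psd unfolding pos_semidef_mat_def by auto
  define Q where "Q n = (\<Sum>i<S. d i n \<bullet> (M i *\<^sub>v d i n))" for n
  have Qstep: "Q n \<le> Q (n - 1)" if n: "n \<ge> 1" for n
  proof -
    define mu where "mu = (1 - \<gamma>) \<cdot>\<^sub>v lam (n - 1) + \<gamma> \<cdot>\<^sub>v lam n"
    define Y where "Y i = (1 - \<gamma>) \<cdot>\<^sub>v (C i *\<^sub>v d i (n - 1)) + \<gamma> \<cdot>\<^sub>v (C i *\<^sub>v d i n)" for i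
    have st: "d i n \<bullet> (M i *\<^sub>v d i n) - d i (n - 1) \<bullet> (M i *\<^sub>v d i (n - 1)) \<le> 2 * dt * (mu \<bullet> Y i)"
      if i: "i < S" for i
      unfolding mu_def Y_def
      by (rule step_energy[OF M_pd[OF i] K_psd[OF i] C_dim[OF i] d_dim[OF i] v_dim[OF i] v_dim[OF i]
             lam_dim lam_dim eq_motion[OF i] eq_motion[OF i] eq_trap[OF i n] dt_pos gamma(1)])
    have "Q n - Q (n - 1) = (\<Sum>i<S. d i n \<bullet> (M i *\<^sub>v d i n) - d i (n - 1) \<bullet> (M i *\<^sub>v d i (n - 1)))"
      by (simp add: Q_def sum_subtractf)
    also have "\<dots> \<le> (\<Sum>i<S. 2 * dt * (mu \<bullet> Y i))" by (rule sum_mono) (use st in auto)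
    also have "\<dots> = 2 * dt * (\<Sum>i<S. mu \<bullet> Y i)" by (simp add: sum_distrib_left)
    also have "(\<Sum>i<S. mu \<bullet> Y i) = 0"
    proof -
      have "(\<Sum>i<S. mu \<bullet> Y i) = (\<Sum>i<S. \<Sum>r<p. mu$r * ((1 - \<gamma>) * (C i *\<^sub>v d i (n - 1))$r + \<gamma> * (C i *\<^sub>v d i n)$r))"
      proof (rule sum.cong[OF refl])
        fix i assume "i \<in> {..<S}"
        then have i: "i < S" by simp
        have dY: "dim_vec (Y i) = p" using C_dim[OF i] unfolding Y_def by simp
        show "mu \<bullet> Y i = (\<Sum>r<p. mu$r * ((1 - \<gamma>) * (C i *\<^sub>v d i (n - 1))$r + \<gamma> * (C i *\<^sub>v d i n)$r))"
          unfolding scalar_prod_def dY atLeast0LessThan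
          by (rule sum.cong[OF refl]) (use C_dim[OF i] in \<open>auto simp: Y_def\<close>)
      qed
      also have "\<dots> = (\<Sum>r<p. \<Sum>i<S. mu$r * ((1 - \<gamma>) * (C i *\<^sub>v d i (n - 1))$r + \<gamma> * (C i *\<^sub>v d i n)$r))"
        by (rule sum.swap)
      also have "\<dots> = (\<Sum>r<p. 0)"
      proof (rule sum.cong[OF refl])
        fix r assume "r \<in> {..<p}"
        then have r: "r < p" by simp
        have "(\<Sum>i<S. mu$r * ((1 - \<gamma>) * (C i *\<^sub>v d i (n - 1))$r + \<gamma> * (C i *\<^sub>v d i n)$r))
          = mu$r * (1 - \<gamma>) * (\<Sum>i<S. (C i *\<^sub>v d i (n - 1))$r) + mu$r * \<gamma> * (\<Sum>i<S. (C i *\<^sub>v d i n)$r)"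
          by (simp add: sum_distrib_left sum.distrib ring_distribs mult.assoc)
        then show "(\<Sum>i<S. mu$r * ((1 - \<gamma>) * (C i *\<^sub>v d i (n - 1))$r + \<gamma> * (C i *\<^sub>v d i n)$r)) = 0"
          using eq_constraint[OF r] by simp
      qed
      finally show ?thesis by simp
    qed
    finally show ?thesis by simp
  qed
  have Qmono: "Q n \<le> Q 0" for n
  proof (induction n)
    case 0 then show ?case by simp
  next
    case (Suc n) then show ?case using Qstep[of "Suc n"] by simp
  qed
  have dQ: "d i n \<bullet> (M i *\<^sub>v d i n) \<le> Q 0" if i: "i < S" for i n
  proof -
    have "d i n \<bullet> (M i *\<^sub>v d i n) \<le> Q n" unfolding Q_def
      by (rule member_le_sum) (use i in \<open>auto intro: pd_nonneg[OF M_pd d_dim]\<close>)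
    then show ?thesis using Qmono[of n] by simp
  qed
  have dB: "bounded_vec_seq (m i) (d i)" if i: "i < S" for i
  proof (rule bvs_intro)
    fix j assume j: "j < m i"
    obtain c where c: "\<And>x. x \<in> carrier_vec (m i) \<Longrightarrow> \<bar>x$j\<bar> \<le> c + x \<bullet> (M i *\<^sub>v x)"
      using pd_coord[OF M_pd[OF i] j] by blast
    show "\<exists>B. \<forall>n. \<bar>d i n $ j\<bar> \<le> B"
    proof (rule exI[of _ "c + Q 0"], intro allI)
      fix n show "\<bar>d i n $ j\<bar> \<le> c + Q 0" using c[OF d_dim[OF i, of n]] dQ[OF i, of n] by linarith
    qed
  qed
  have vB: "bounded_vec_seq (m i) (v i)" if i: "i < S" for i
  proof (rule bvs_intro)
    fix j assume j: "j < m i"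
    obtain D where D: "\<And>n j. j < m i \<Longrightarrow> \<bar>d i n $ j\<bar> \<le> D" using bvs_elim[OF dB[OF i]] by blast
    have rec: "\<gamma> * v i n $ j + (1 - \<gamma>) * v i (n - 1) $ j = (d i n $ j - d i (n - 1) $ j) / dt"
      if n: "n \<ge> 1" for n
    proof -
      have "d i n $ j = d i (n - 1) $ j + dt * ((1 - \<gamma>) * v i (n - 1) $ j + \<gamma> * v i n $ j)"
        using arg_cong[OF eq_trap[OF i n], of "\<lambda>z. z $ j"] j d_dim[OF i, of "n - 1"]
          v_dim[OF i, of "n - 1"] v_dim[OF i, of n] by simp
      then show ?thesis using dt_pos by (simp add: field_simps)
    qed
    have W: "\<bar>(d i n $ j - d i (n - 1) $ j) / dt\<bar> \<le> 2 * D / dt" for n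
    proof -
      have "\<bar>d i n $ j - d i (n - 1) $ j\<bar> \<le> 2 * D" using D[OF j, of n] D[OF j, of "n - 1"] by linarith
      then show ?thesis using dt_pos by (simp add: abs_divide divide_right_mono)
    qed
    show "\<exists>B. \<forall>n. \<bar>v i n $ j\<bar> \<le> B"
      using geo_bound[OF gamma, of "\<lambda>n. v i n $ j" "\<lambda>n. (d i n $ j - d i (n - 1) $ j) / dt", OF rec W] by blast
  qed
  have lamB: "bounded_vec_seq p lam"
  proof (rule bvs_intro)
    fix r assume r: "r < p"
    define L where "L = concat (map (\<lambda>i. cols (C i)) [0..<S])"
    have Lc: "set L \<subseteq> carrier_vec p"
    proof
      fix u assume "u \<in> set L"
      then obtain i where i: "i < S" and u: "u \<in> set (cols (C i))" unfolding L_def by auto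
      then show "u \<in> carrier_vec p" using cols_dim[of "C i"] C_dim[OF i] by auto
    qed
    have Bc: "block_row p S C \<in> carrier_mat p (length L)" unfolding block_row_def L_def[symmetric] by simp
    have cB: "cols (block_row p S C) = L" unfolding block_row_def L_def[symmetric] using Lc by simp
    obtain a U where U: "finite U" "U \<subseteq> set L" and aU: "\<And>q. q < p \<Longrightarrow> unit_vec p r $ q = (\<Sum>u\<in>U. a u * u $ q)"
      using rank_full_span'[OF Bc C_rank[unfolded mat_rank_def], of "unit_vec p r"] cB by auto
    have G: "\<exists>G. \<forall>n. \<bar>u \<bullet> lam n\<bar> \<le> G" if u: "u \<in> set L" for u
    proof -
      obtain i where i: "i < S" and u: "u \<in> set (cols (C i))" using u unfolding L_def by auto
      then obtain c where c: "c < m i" and uc: "u = col (C i) c"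
        using C_dim[OF i] unfolding cols_def by auto
      obtain B1 where B1: "\<And>n. \<bar>(M i *\<^sub>v v i n) $ c\<bar> \<le> B1"
        using matvec_bounded[OF Mc[OF i] v_dim[OF i] vB[OF i] c] by blast
      obtain B2 where B2: "\<And>n. \<bar>(K i *\<^sub>v d i n) $ c\<bar> \<le> B2"
        using matvec_bounded[OF Kc[OF i] d_dim[OF i] dB[OF i] c] by blast
      have "u \<bullet> lam n = (M i *\<^sub>v v i n) $ c + (K i *\<^sub>v d i n) $ c" for n
      proof -
        have "u \<bullet> lam n = (transpose_mat (C i) *\<^sub>v lam n) $ c"
          using C_dim[OF i] c uc by simp
        also have "\<dots> = (M i *\<^sub>v v i n + K i *\<^sub>v d i n) $ c" using eq_motion[OF i, of n] by simp
        also have "\<dots> = (M i *\<^sub>v v i n) $ c + (K i *\<^sub>v d i n) $ c"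
          using Mc[OF i] Kc[OF i] c by simp
        finally show ?thesis .
      qed
      note ueq = this
      have "\<bar>u \<bullet> lam n\<bar> \<le> B1 + B2" for n
        using ueq[of n] B1[of n] B2[of n] abs_triangle_ineq[of "(M i *\<^sub>v v i n) $ c" "(K i *\<^sub>v d i n) $ c"] by linarith
      then show ?thesis by blast
    qed
    have "\<forall>u\<in>set L. \<exists>G. \<forall>n. \<bar>u \<bullet> lam n\<bar> \<le> G" using G by blast
    then obtain Gf where Gf': "\<forall>u\<in>set L. \<forall>n. \<bar>u \<bullet> lam n\<bar> \<le> Gf u" by (rule bchoice[elim_format]) blast
    have Gf: "\<And>u n. u \<in> set L \<Longrightarrow> \<bar>u \<bullet> lam n\<bar> \<le> Gf u" using Gf' by blast
    show "\<exists>B. \<forall>n. \<bar>lam n $ r\<bar> \<le> B"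
    proof (rule exI[of _ "\<Sum>u\<in>U. \<bar>a u\<bar> * Gf u"], intro allI)
      fix n
      have "lam n $ r = unit_vec p r \<bullet> lam n" using scalar_prod_left_unit[OF lam_dim r] by simp
      also have "\<dots> = (\<Sum>q<p. unit_vec p r $ q * lam n $ q)"
        unfolding scalar_prod_def using lam_dim[of n] by (simp add: atLeast0LessThan)
      also have "\<dots> = (\<Sum>q<p. (\<Sum>u\<in>U. a u * u $ q) * lam n $ q)" using aU by simp
      also have "\<dots> = (\<Sum>u\<in>U. a u * (\<Sum>q<p. u $ q * lam n $ q))"
        by (simp add: sum_distrib_right sum_distrib_left mult.assoc sum.swap[of _ "{..<p}"])
      also have "\<dots> = (\<Sum>u\<in>U. a u * (u \<bullet> lam n))"
        unfolding scalar_prod_def using lam_dim[of n] by (simp add: atLeast0LessThan)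
      finally have e: "lam n $ r = (\<Sum>u\<in>U. a u * (u \<bullet> lam n))" .
      have "\<bar>\<Sum>u\<in>U. a u * (u \<bullet> lam n)\<bar> \<le> (\<Sum>u\<in>U. \<bar>a u * (u \<bullet> lam n)\<bar>)" by (rule sum_abs)
      also have "\<dots> \<le> (\<Sum>u\<in>U. \<bar>a u\<bar> * Gf u)"
      proof (rule sum_mono)
        fix u assume "u \<in> U"
        then have "\<bar>u \<bullet> lam n\<bar> \<le> Gf u" using U Gf by blast
        then show "\<bar>a u * (u \<bullet> lam n)\<bar> \<le> \<bar>a u\<bar> * Gf u"
          unfolding abs_mult by (rule mult_left_mono) simp
      qed
      finally show "\<bar>lam n $ r\<bar> \<le> (\<Sum>u\<in>U. \<bar>a u\<bar> * Gf u)" using e by simp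
    qed
  qed
  show ?thesis using dB vB lamB by blast
qed

end
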